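(* Let $S$ and $T$ be finite sets and let $L:\{0,1\}^S\to\{0,1\}$ be a monotone Boolean function. Let $\psi:S\to T$ be a function such that $$|\psi(A)|=|A|\quad\text{for every minimal one-set } A \text{ of } L.$$ Let $X=(X(i))_{i\in S}$ and $Y=(Y(j))_{j\in T}$ be i.i.d. collections of Boolean random variables with intensity $p\in[0,1]$. Then $$\mathbb P[L(Y\circ\psi)=1]\leq \mathbb P[L(X)=1].$$ Similarly, if $|\psi(Z)|=|Z|$ for every minimal zero-set $Z$ of $L$, then $\mathbb P[L(Y\circ\psi)=1]\geq \mathbb P[L(X)=1]$.
   Context: - $L$ is monotone if $x\leq y$ pointwise implies $L(x)\leq L(y)$. - A one-set of $L$ is a set $A\subset S$ with $L(1_A)=1$; a zero-set is a set $Z\subset S$ with $L(1-1_Z)=0$. A one-set (zero-set) is minimal if it contains no other one-set (zero-set) as a proper subset. - "I.i.d. with intensity $p$" means independent with $\mathbb P[X(i)=1]=p$. - $(Y\circ\psi)(i)=Y(\psi(i))$ for $i\in S$. *)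

theory Defs
  imports "HOL-Probability.Probability"
begin

text \<open>Boolean functions L on {0,1}^S are modelled as predicates on S-configurations
  'a \<Rightarrow> bool with S the (finite) universe of type 'a; 1 = True, 0 = False.\<close>

definition one_set :: "(('a \<Rightarrow> bool) \<Rightarrow> bool) \<Rightarrow> 'a set \<Rightarrow> bool" where
  "one_set L A \<longleftrightarrow> L (\<lambda>i. i \<in> A)"

definition zero_set :: "(('a \<Rightarrow> bool) \<Rightarrow> bool) \<Rightarrow> 'a set \<Rightarrow> bool" where
  "zero_set L Z \<longleftrightarrow> \<not> L (\<lambda>i. i \<notin> Z)"

definition minimal_one_set :: "(('a \<Rightarrow> bool) \<Rightarrow> bool) \<Rightarrow> 'a set \<Rightarrow> bool" where
  "minimal_one_set L A \<longleftrightarrow> one_set L A \<and> (\<forall>B. B \<subset> A \<longrightarrow> \<not> one_set L B)"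

definition minimal_zero_set :: "(('a \<Rightarrow> bool) \<Rightarrow> bool) \<Rightarrow> 'a set \<Rightarrow> bool" where
  "minimal_zero_set L Z \<longleftrightarrow> zero_set L Z \<and> (\<forall>B. B \<subset> Z \<longrightarrow> \<not> zero_set L B)"

definition iid_bernoulli :: "real \<Rightarrow> ('a::finite \<Rightarrow> bool) pmf" where
  "iid_bernoulli p = Pi_pmf UNIV False (\<lambda>_. bernoulli_pmf p)"

end

theory Submission imports Defs begin

lemma exists_minimal:
  fixes P :: "('a::finite) set \<Rightarrow> bool"
  assumes "P B"
  shows "\<exists>A\<subseteq>B. P A \<and> (\<forall>C. C \<subset> A \<longrightarrow> \<not> P C)"
  using assms
proof (induction "card B" arbitrary: B rule: less_induct)
  case less
  show ?case
  proof (cases "\<forall>C. C \<subset> B \<longrightarrow> \<not> P C")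
    case True then show ?thesis using less.prems by blast
  next
    case False
    then obtain C where C: "C \<subset> B" "P C" by blast
    have "card C < card B" using C(1) by (simp add: psubset_card_mono)
    from less.hyps[OF this C(2)] C(1) show ?thesis by blast
  qed
qed

lemma int_pair:
  fixes F :: "('a::finite \<Rightarrow> 'b::finite) \<Rightarrow> real"
  shows "measure_pmf.expectation (map_pmf (\<lambda>(y,f). f(x:=y)) (pair_pmf B M)) F
     = (\<Sum>y\<in>UNIV. pmf B y * measure_pmf.expectation M (\<lambda>f. F (f(x:=y))))"
proof -
  have "measure_pmf.expectation (map_pmf (\<lambda>(y,f). f(x:=y)) (pair_pmf B M)) F
      = measure_pmf.expectation (pair_pmf B M) (\<lambda>z. F ((snd z)(x:=fst z)))"
    by (simp add: case_prod_beta)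
  also have "\<dots> = (\<Sum>z\<in>UNIV. pmf (pair_pmf B M) z *\<^sub>R F ((snd z)(x:=fst z)))"
    by (rule integral_measure_pmf) auto
  also have "\<dots> = (\<Sum>y\<in>UNIV. \<Sum>f\<in>UNIV. pmf B y * (pmf M f * F (f(x:=y))))"
    by (subst sum.cartesian_product) (auto simp: pmf_pair mult.assoc case_prod_beta intro!: sum.cong)
  also have "\<dots> = (\<Sum>y\<in>UNIV. pmf B y * measure_pmf.expectation M (\<lambda>f. F (f(x:=y))))"
  proof -
    have "\<And>y. measure_pmf.expectation M (\<lambda>f. F (f(x:=y))) = (\<Sum>f\<in>UNIV. pmf M f *\<^sub>R F (f(x:=y)))"
      by (rule integral_measure_pmf) auto
    then show ?thesis by (simp add: sum_distrib_left)
  qed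
  finally show ?thesis .
qed

lemma decomp:
  fixes F :: "('u::finite \<Rightarrow> bool) \<Rightarrow> real"
  assumes "u \<noteq> v"
  shows "measure_pmf.expectation (iid_bernoulli p) F =
    (\<Sum>a\<in>UNIV. \<Sum>b\<in>UNIV. pmf (bernoulli_pmf p) a * pmf (bernoulli_pmf p) b *
       measure_pmf.expectation (Pi_pmf (UNIV - {u,v}) False (\<lambda>_. bernoulli_pmf p)) (\<lambda>g. F (g(v:=b, u:=a))))"
proof -
  let ?B = "bernoulli_pmf p"
  let ?R = "UNIV - {u,v} :: 'u set"
  have U: "(UNIV::'u set) = insert u (insert v ?R)" by auto
  have 1: "iid_bernoulli p = map_pmf (\<lambda>(y,f). f(u:=y)) (pair_pmf ?B (Pi_pmf (insert v ?R) False (\<lambda>_. ?B)))"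
    unfolding iid_bernoulli_def by (subst U, subst Pi_pmf_insert) (use assms in auto)
  have 2: "Pi_pmf (insert v ?R) False (\<lambda>_. ?B) = map_pmf (\<lambda>(y,f). f(v:=y)) (pair_pmf ?B (Pi_pmf ?R False (\<lambda>_. ?B)))"
    by (subst Pi_pmf_insert) auto
  show ?thesis
    unfolding 1 int_pair 2 by (simp add: sum_distrib_left mult.assoc)
qed

lemma prob_as_exp:
  "measure_pmf.prob M {x. P x} = measure_pmf.expectation M (\<lambda>x. if P x then 1 else 0)"
proof -
  have "(\<lambda>x. if P x then 1 else 0 :: real) = indicator {x. P x}" by (auto simp: indicator_def)
  then show ?thesis by simp
qed

lemma step_ineq:
  fixes L :: "('s::finite \<Rightarrow> bool) \<Rightarrow> bool" and \<phi> :: "'s \<Rightarrow> 'u::finite"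
  assumes mono: "mono L" and p: "0 \<le> p" "p \<le> 1" and uv: "u \<noteq> v"
  shows "((\<forall>A. minimal_one_set L A \<longrightarrow> \<not>((\<exists>k\<in>A. \<phi> k = u) \<and> (\<exists>k\<in>A. \<phi> k = v))) \<longrightarrow>
          measure_pmf.prob (iid_bernoulli p) {Z. L (Z \<circ> (\<lambda>k. if \<phi> k = v then u else \<phi> k))}
          \<le> measure_pmf.prob (iid_bernoulli p) {Z. L (Z \<circ> \<phi>)})
       \<and> ((\<forall>A. minimal_zero_set L A \<longrightarrow> \<not>((\<exists>k\<in>A. \<phi> k = u) \<and> (\<exists>k\<in>A. \<phi> k = v))) \<longrightarrow>
          measure_pmf.prob (iid_bernoulli p) {Z. L (Z \<circ> (\<lambda>k. if \<phi> k = v then u else \<phi> k))}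
          \<ge> measure_pmf.prob (iid_bernoulli p) {Z. L (Z \<circ> \<phi>)})"
proof -
  let ?m = "\<lambda>k. if \<phi> k = v then u else \<phi> k"
  let ?N = "Pi_pmf (UNIV - {u,v}) False (\<lambda>_. bernoulli_pmf p)"
  define c where "c g a b = (g(v:=b, u:=a)) \<circ> \<phi>" for g :: "'u \<Rightarrow> bool" and a b
  define w where "w a = pmf (bernoulli_pmf p) a" for a
  have wT: "w True = p" and wF: "w False = 1 - p" using p by (auto simp: w_def)
  have cm: "(g(v:=b, u:=a)) \<circ> ?m = c g a a" for g a b
    using uv by (auto simp: c_def fun_eq_iff)
  have cmono: "L (c g a b) \<Longrightarrow> a \<le> a' \<Longrightarrow> b \<le> b' \<Longrightarrow> L (c g a' b')" for g a b a' b'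
  proof -
    assume "L (c g a b)" "a \<le> a'" "b \<le> b'"
    moreover have "c g a b \<le> c g a' b'" using \<open>a \<le> a'\<close> \<open>b \<le> b'\<close>
      by (auto simp: c_def le_fun_def)
    ultimately show ?thesis using mono by (auto simp: mono_def le_bool_def)
  qed
  have integ: "integrable (measure_pmf ?N) (f :: _ \<Rightarrow> real)" for f
    by (rule integrable_measure_pmf_finite) simp
  have E: "measure_pmf.prob (iid_bernoulli p) {Z. L (Z \<circ> \<psi>)} =
     measure_pmf.expectation ?N (\<lambda>g. \<Sum>a\<in>UNIV. \<Sum>b\<in>UNIV. w a * w b *
        (if L ((g(v:=b, u:=a)) \<circ> \<psi>) then 1 else 0))" for \<psi> :: "'s \<Rightarrow> 'u"
    unfolding prob_as_exp decomp[OF uv] w_def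
    by (simp add: integral_sum integ integral_mult_right_zero del: UNIV_bool)
  have pp: "0 \<le> p * (1 - p)" using p by simp
  show ?thesis
  proof (intro conjI impI)
    assume H: "\<forall>A. minimal_one_set L A \<longrightarrow> \<not>((\<exists>k\<in>A. \<phi> k = u) \<and> (\<exists>k\<in>A. \<phi> k = v))"
    have pw: "(\<Sum>a\<in>UNIV. \<Sum>b\<in>UNIV. w a * w b * (if L (c g a a) then 1 else 0))
        \<le> (\<Sum>a\<in>UNIV. \<Sum>b\<in>UNIV. w a * w b * (if L (c g a b) then 1 else 0))" for g
    proof -
      have nb: "\<not> (L (c g True True) \<and> \<not> L (c g True False) \<and> \<not> L (c g False True))"
      proof
        assume bad: "L (c g True True) \<and> \<not> L (c g True False) \<and> \<not> L (c g False True)"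
        have "one_set L {k. c g True True k}" using bad by (simp add: one_set_def)
        then obtain A where A: "A \<subseteq> {k. c g True True k}" "one_set L A"
          "\<forall>C. C \<subset> A \<longrightarrow> \<not> one_set L C"
          using exists_minimal[of "one_set L"] by blast
        have "\<exists>k\<in>A. \<phi> k = u"
        proof (rule ccontr)
          assume "\<not> ?thesis"
          then have "(\<lambda>i. i \<in> A) \<le> c g False True" using A(1) uv
            by (auto simp: le_fun_def c_def)
          then have "L (c g False True)" using A(2) mono by (auto simp: one_set_def mono_def le_bool_def)
          then show False using bad by simp
        qed
        moreover have "\<exists>k\<in>A. \<phi> k = v"
        proof (rule ccontr)
          assume "\<not> ?thesis"
          then have "(\<lambda>i. i \<in> A) \<le> c g True False" using A(1) uv
            by (auto simp: le_fun_def c_def)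
          then have "L (c g True False)" using A(2) mono by (auto simp: one_set_def mono_def le_bool_def)
          then show False using bad by simp
        qed
        ultimately show False using H A by (auto simp: minimal_one_set_def)
      qed
      have m1: "L (c g False False) \<Longrightarrow> L (c g False True)" "L (c g False False) \<Longrightarrow> L (c g True False)"
        "L (c g False True) \<Longrightarrow> L (c g True True)" "L (c g True False) \<Longrightarrow> L (c g True True)"
        by (auto elim: cmono)
      show ?thesis using nb m1 pp
        by (cases "L (c g False False)"; cases "L (c g False True)"; cases "L (c g True False)";
            cases "L (c g True True)") (simp_all add: UNIV_bool wT wF algebra_simps)
    qed
    show "measure_pmf.prob (iid_bernoulli p) {Z. L (Z \<circ> ?m)}
          \<le> measure_pmf.prob (iid_bernoulli p) {Z. L (Z \<circ> \<phi>)}"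
      unfolding E cm c_def
      by (rule integral_mono[OF integ integ]) (simp add: pw[unfolded c_def])
  next
    assume H: "\<forall>A. minimal_zero_set L A \<longrightarrow> \<not>((\<exists>k\<in>A. \<phi> k = u) \<and> (\<exists>k\<in>A. \<phi> k = v))"
    have pw: "(\<Sum>a\<in>UNIV. \<Sum>b\<in>UNIV. w a * w b * (if L (c g a a) then 1 else 0))
        \<ge> (\<Sum>a\<in>UNIV. \<Sum>b\<in>UNIV. w a * w b * (if L (c g a b) then 1 else 0))" for g
    proof -
      have nb: "\<not> (\<not> L (c g False False) \<and> L (c g True False) \<and> L (c g False True))"
      proof
        assume bad: "\<not> L (c g False False) \<and> L (c g True False) \<and> L (c g False True)"
        have "zero_set L {k. \<not> c g False False k}" using bad by (simp add: zero_set_def)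
        then obtain A where A: "A \<subseteq> {k. \<not> c g False False k}" "zero_set L A"
          "\<forall>C. C \<subset> A \<longrightarrow> \<not> zero_set L C"
          using exists_minimal[of "zero_set L"] by blast
        have "\<exists>k\<in>A. \<phi> k = u"
        proof (rule ccontr)
          assume "\<not> ?thesis"
          then have "c g True False \<le> (\<lambda>i. i \<notin> A)" using A(1) uv
            by (auto simp: le_fun_def c_def)
          then have "L (\<lambda>i. i \<notin> A)" using bad mono by (auto simp: mono_def le_bool_def)
          then show False using A(2) by (simp add: zero_set_def)
        qed
        moreover have "\<exists>k\<in>A. \<phi> k = v"
        proof (rule ccontr)
          assume "\<not> ?thesis"
          then have "c g False True \<le> (\<lambda>i. i \<notin> A)" using A(1) uv
            by (auto simp: le_fun_def c_def)
          then have "L (\<lambda>i. i \<notin> A)" using bad mono by (auto simp: mono_def le_bool_def)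
          then show False using A(2) by (simp add: zero_set_def)
        qed
        ultimately show False using H A by (auto simp: minimal_zero_set_def)
      qed
      have m1: "L (c g False False) \<Longrightarrow> L (c g False True)" "L (c g False False) \<Longrightarrow> L (c g True False)"
        "L (c g False True) \<Longrightarrow> L (c g True True)" "L (c g True False) \<Longrightarrow> L (c g True True)"
        by (auto elim: cmono)
      show ?thesis using nb m1 pp
        by (cases "L (c g False False)"; cases "L (c g False True)"; cases "L (c g True False)";
            cases "L (c g True True)") (simp_all add: UNIV_bool wT wF algebra_simps)
    qed
    show "measure_pmf.prob (iid_bernoulli p) {Z. L (Z \<circ> ?m)}
          \<ge> measure_pmf.prob (iid_bernoulli p) {Z. L (Z \<circ> \<phi>)}"
      unfolding E cm c_def
      by (rule integral_mono[OF integ integ]) (simp add: pw[unfolded c_def])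
  qed
qed


lemma reindex:
  fixes h :: "'a::finite \<Rightarrow> 'b::finite"
  assumes "inj h"
  shows "measure_pmf.prob (iid_bernoulli p :: ('b \<Rightarrow> bool) pmf) {Z. P (Z \<circ> h)}
       = measure_pmf.prob (iid_bernoulli p :: ('a \<Rightarrow> bool) pmf) {X. P X}"
proof -
  let ?B = "bernoulli_pmf p"
  have 1: "Pi_pmf (UNIV::'a set) False (\<lambda>_. ?B) = map_pmf (\<lambda>g. g \<circ> h) (Pi_pmf (range h) False (\<lambda>_. ?B))"
    by (rule Pi_pmf_bij_betw) (use assms in \<open>auto simp: bij_betw_def\<close>)
  have 2: "Pi_pmf (range h) False (\<lambda>_. ?B) = map_pmf (\<lambda>f x. if x \<in> range h then f x else False) (Pi_pmf UNIV False (\<lambda>_. ?B))"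
    by (rule Pi_pmf_subset) auto
  have 3: "(\<lambda>g. g \<circ> h) \<circ> (\<lambda>f x. if x \<in> range h then f x else False) = (\<lambda>g. g \<circ> h)"
    by (auto simp: fun_eq_iff)
  have "(iid_bernoulli p :: ('a \<Rightarrow> bool) pmf) = map_pmf (\<lambda>g. g \<circ> h) (iid_bernoulli p)"
    unfolding iid_bernoulli_def 1 2 map_pmf_comp
    by (metis 3 comp_apply)
  then show ?thesis by (simp add: vimage_def)
qed

theorem proposition5:
  fixes L :: "('s::finite \<Rightarrow> bool) \<Rightarrow> bool"
    and \<psi> :: "'s \<Rightarrow> 't::finite"
    and p :: real
  assumes "mono L"
    and "0 \<le> p" and "p \<le> 1"
  shows "((\<forall>A. minimal_one_set L A \<longrightarrow> card (\<psi> ` A) = card A) \<longrightarrow>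
           measure_pmf.prob (iid_bernoulli p) {Y :: 't \<Rightarrow> bool. L (Y \<circ> \<psi>)}
             \<le> measure_pmf.prob (iid_bernoulli p) {X :: 's \<Rightarrow> bool. L X})
       \<and> ((\<forall>Z. minimal_zero_set L Z \<longrightarrow> card (\<psi> ` Z) = card Z) \<longrightarrow>
           measure_pmf.prob (iid_bernoulli p) {Y :: 't \<Rightarrow> bool. L (Y \<circ> \<psi>)}
             \<ge> measure_pmf.prob (iid_bernoulli p) {X :: 's \<Rightarrow> bool. L X})"
proof -
  define ph :: "'s set \<Rightarrow> 's \<Rightarrow> 's + 't" where "ph D k = (if k \<in> D then Inr (\<psi> k) else Inl k)" for D k
  define Q where "Q D = measure_pmf.prob (iid_bernoulli p :: ('s + 't \<Rightarrow> bool) pmf) {Z. L (Z \<circ> ph D)}" for D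
  have ins: "ph (insert x D) = (\<lambda>k. if ph D k = Inl x then Inr (\<psi> x) else ph D k)" if "x \<notin> D" for x D
    using that by (auto simp: ph_def fun_eq_iff)
  have cond: "\<not>((\<exists>k\<in>A. ph D k = Inr (\<psi> x)) \<and> (\<exists>k\<in>A. ph D k = Inl x))"
    if "x \<notin> D" "card (\<psi> ` A) = card A" for x D A
  proof
    assume "(\<exists>k\<in>A. ph D k = Inr (\<psi> x)) \<and> (\<exists>k\<in>A. ph D k = Inl x)"
    then obtain k1 k2 where k: "k1 \<in> A" "ph D k1 = Inr (\<psi> x)" "k2 \<in> A" "ph D k2 = Inl x" by blast
    have "inj_on \<psi> A" using that(2) by (simp add: eq_card_imp_inj_on)
    moreover have "k1 \<in> D" "\<psi> k1 = \<psi> x" "k2 = x" using k by (auto simp: ph_def split: if_splits)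
    ultimately show False using k that(1) by (metis inj_onD)
  qed
  have Q0: "Q {} = measure_pmf.prob (iid_bernoulli p) {X :: 's \<Rightarrow> bool. L X}"
  proof -
    have "ph {} = Inl" by (auto simp: ph_def fun_eq_iff)
    then show ?thesis unfolding Q_def by (simp add: reindex)
  qed
  have QU: "Q UNIV = measure_pmf.prob (iid_bernoulli p) {Y :: 't \<Rightarrow> bool. L (Y \<circ> \<psi>)}"
  proof -
    have "\<And>Z :: 's + 't \<Rightarrow> bool. Z \<circ> ph UNIV = (Z \<circ> Inr) \<circ> \<psi>" by (auto simp: ph_def fun_eq_iff)
    then show ?thesis unfolding Q_def by (simp add: reindex[where P = "\<lambda>Y. L (Y \<circ> \<psi>)"])
  qed
  show ?thesis
  proof (intro conjI impI)
    assume H: "\<forall>A. minimal_one_set L A \<longrightarrow> card (\<psi> ` A) = card A"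
    have "Q D \<le> Q {}" if "finite D" for D
      using that
    proof (induction D rule: finite_induct)
      case (insert x F)
      have "Q (insert x F) \<le> Q F"
        unfolding Q_def ins[OF insert(2)]
        using step_ineq[OF assms(1-3), of "Inr (\<psi> x)" "Inl x" "ph F"] cond[OF insert(2)] H
        by auto
      then show ?case using insert by linarith
    qed simp
    then show "measure_pmf.prob (iid_bernoulli p) {Y :: 't \<Rightarrow> bool. L (Y \<circ> \<psi>)}
             \<le> measure_pmf.prob (iid_bernoulli p) {X :: 's \<Rightarrow> bool. L X}"
      using Q0 QU by (metis finite)
  next
    assume H: "\<forall>A. minimal_zero_set L A \<longrightarrow> card (\<psi> ` A) = card A"
    have "Q D \<ge> Q {}" if "finite D" for D
      using that
    proof (induction D rule: finite_induct)
      case (insert x F)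
      have "Q (insert x F) \<ge> Q F"
        unfolding Q_def ins[OF insert(2)]
        using step_ineq[OF assms(1-3), of "Inr (\<psi> x)" "Inl x" "ph F"] cond[OF insert(2)] H
        by auto
      then show ?case using insert by linarith
    qed simp
    then show "measure_pmf.prob (iid_bernoulli p) {Y :: 't \<Rightarrow> bool. L (Y \<circ> \<psi>)}
             \<ge> measure_pmf.prob (iid_bernoulli p) {X :: 's \<Rightarrow> bool. L X}"
      using Q0 QU by (metis finite)
  qed
qed

end
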